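(* Let $\mathcal{C}$ be a finite or countable alphabet with letter probabilities $(p_\alpha)_{\alpha\in\mathcal{C}}$, $0<p_\alpha<1$, $\sum_\alpha p_\alpha=1$, and let $\mathbb{P}$ be the product measure with these identically distributed marginals. Then for every $n\ge2$, $\mathbb{P}\Big(\bigcup_{j=1}^{\lceil n/2\rceil}B_n(j)\Big)=\mathbb{P}\Big(\bigcup_{j=\lfloor n/2\rfloor}^{n-1}R_n(j)\Big)\le\frac{n}{2}\,m_2^{\lfloor n/2\rfloor}$.
   Context: $\mathbb{P}(x_1^n)=\prod_{i=1}^n p_{x_i}$; $x_a^b=(x_a,\dots,x_b)$; $m_2=\sum_\alpha p_\alpha^2$. For $1\le j\le n-1$, $R_n(j)=\{x_1^n\in\mathcal{C}^n: x_1^j=x_{n-j+1}^n\}$, and $B_n(j)$ is the set of strings $x_1^n\in\mathcal{C}^n$ that are obtained by repeating the block $x_1^j$: writing $n=j\lfloor n/j\rfloor+r$ with $0\le r<j$, $x_1^n=(x_1^j,x_1^j,\dots,x_1^j,x_1^r)$ with $\lfloor n/j\rfloor$ copies of $x_1^j$ (equivalently $x_{i+j}=x_i$ for all $1\le i\le n-j$). *)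

theory Defs
  imports "HOL-Analysis.Analysis"
begin

text \<open>Strings of length n over alphabet C are lists (0-indexed: x_i is xs ! (i-1)).\<close>
definition strings :: "'a set \<Rightarrow> nat \<Rightarrow> 'a list set" where
  "strings C n = {xs. length xs = n \<and> set xs \<subseteq> C}"

definition Pr :: "('a \<Rightarrow> real) \<Rightarrow> 'a list set \<Rightarrow> real" where
  "Pr p S = infsum (\<lambda>xs. \<Prod>i<length xs. p (xs ! i)) S"

definition m2 :: "('a \<Rightarrow> real) \<Rightarrow> 'a set \<Rightarrow> real" where
  "m2 p C = infsum (\<lambda>a. (p a)^2) C"

definition Rset :: "'a set \<Rightarrow> nat \<Rightarrow> nat \<Rightarrow> 'a list set" where
  "Rset C n j = {xs \<in> strings C n. take j xs = drop (n - j) xs}"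

definition Bset :: "'a set \<Rightarrow> nat \<Rightarrow> nat \<Rightarrow> 'a list set" where
  "Bset C n j = {xs \<in> strings C n. \<forall>i. i + j < n \<longrightarrow> xs ! (i + j) = xs ! i}"

end

theory Submission
  imports Defs
begin


lemma map_bij:
  "bij_betw (\<lambda>g. map g [0..<j]) (PiE {..<j} (\<lambda>_. C)) (strings C j)"
proof (rule bij_betwI')
  fix g h assume g: "g \<in> PiE {..<j} (\<lambda>_. C)" and h: "h \<in> PiE {..<j} (\<lambda>_. C)"
  show "(map g [0..<j] = map h [0..<j]) = (g = h)"
  proof
    assume e: "map g [0..<j] = map h [0..<j]"
    show "g = h"
    proof
      fix k show "g k = h k"
      proof (cases "k < j")
        case True
        have "\<forall>x\<in>{0..<j}. g x = h x" using e by simp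
        then show ?thesis using True by simp
      next
        case False
        then have "k \<notin> {..<j}" by simp
        then show ?thesis using PiE_arb[OF g] PiE_arb[OF h] by metis
      qed
    qed
  qed simp
next
  fix g assume "g \<in> PiE {..<j} (\<lambda>_. C)"
  then show "map g [0..<j] \<in> strings C j" unfolding strings_def by (auto simp: PiE_iff)
next
  fix u assume u: "u \<in> strings C j"
  show "\<exists>g\<in>PiE {..<j} (\<lambda>_. C). u = map g [0..<j]"
  proof (intro bexI)
    show "u = map (\<lambda>k. if k < j then u ! k else undefined) [0..<j]"
      using u by (auto simp: strings_def intro!: nth_equalityI)
    show "(\<lambda>k. if k < j then u ! k else undefined) \<in> PiE {..<j} (\<lambda>_. C)"
      using u by (auto simp: strings_def PiE_iff extensional_def)
  qed
qed

lemma prodsum: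
  fixes f :: "nat \<Rightarrow> 'a \<Rightarrow> real"
  assumes nn: "\<And>k a. k < j \<Longrightarrow> a \<in> C \<Longrightarrow> 0 \<le> f k a"
    and sm: "\<And>k. k < j \<Longrightarrow> f k summable_on C"
    and pos: "\<And>k. k < j \<Longrightarrow> infsum (f k) C > 0"
  shows "infsum (\<lambda>u. \<Prod>k<j. f k (u ! k)) (strings C j) = (\<Prod>k<j. infsum (f k) C)"
    and "(\<lambda>u. \<Prod>k<j. f k (u ! k)) summable_on (strings C j)"
proof -
  have "infsum (\<lambda>u. \<Prod>k<j. f k (u ! k)) (strings C j)
      = infsum (\<lambda>g. (\<lambda>u. \<Prod>k<j. f k (u ! k)) (map g [0..<j])) (PiE {..<j} (\<lambda>_. C))"
    by (rule infsum_reindex_bij_betw[OF map_bij, symmetric])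
  also have "\<dots> = infsum (\<lambda>g. \<Prod>k\<in>{..<j}. f k (g k)) (PiE {..<j} (\<lambda>_. C))"
    by (intro infsum_cong prod.cong) auto
  also have "\<dots> = (\<Prod>k\<in>{..<j}. infsum (f k) C)"
  proof (rule infsum_prod_PiE_abs)
    fix k assume k: "k \<in> {..<j}"
    show "(\<lambda>x. norm (f k x)) summable_on C"
      using sm[of k] nn[of k] k by (subst summable_on_cong[where g="f k"]) auto
  qed auto
  finally show 1: "infsum (\<lambda>u. \<Prod>k<j. f k (u ! k)) (strings C j) = (\<Prod>k<j. infsum (f k) C)" .
  have "(\<Prod>k<j. infsum (f k) C) > 0" using pos by (intro prod_pos) auto
  then show "(\<lambda>u. \<Prod>k<j. f k (u ! k)) summable_on (strings C j)"
    using 1 infsum_not_exists by (metis less_irrefl)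
qed

lemma rset_bset:
  assumes "j \<le> n"
  shows "Rset C n j = Bset C n (n - j)"
proof -
  have "take j xs = drop (n - j) xs \<longleftrightarrow> (\<forall>i. i + (n - j) < n \<longrightarrow> xs ! (i + (n - j)) = xs ! i)"
    if "xs \<in> strings C n" for xs :: "'a list"
  proof -
    have "take j xs = drop (n - j) xs \<longleftrightarrow> (\<forall>i<j. xs ! i = xs ! (n - j + i))"
      using that assms by (simp add: list_eq_iff_nth_eq strings_def)
    also have "\<dots> \<longleftrightarrow> (\<forall>i. i + (n - j) < n \<longrightarrow> xs ! (i + (n - j)) = xs ! i)"
    proof -
      have e1: "i + (n - j) < n \<longleftrightarrow> i < j" for i using assms by linarith
      have e2: "n - j + i = i + (n - j)" for i by simp
      show ?thesis unfolding e1 e2 by metis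
    qed
    finally show ?thesis .
  qed
  then show ?thesis unfolding Rset_def Bset_def by (intro Collect_cong) blast
qed

lemma union_eq:
  assumes "2 \<le> n"
  shows "(\<Union>j\<in>{n div 2..n-1}. Rset C n j) = (\<Union>j\<in>{1..(n+1) div 2}. Bset C n j)"
proof -
  have "(\<Union>j\<in>{n div 2..n-1}. Rset C n j) = (\<Union>j\<in>{n div 2..n-1}. Bset C n (n - j))"
  proof (rule SUP_cong)
    fix j assume "j \<in> {n div 2..n-1}"
    then have "j \<le> n" by (cases n) auto
    then show "Rset C n j = Bset C n (n - j)" by (rule rset_bset)
  qed simp
  also have "\<dots> = (\<Union>j\<in>(\<lambda>j. n - j) ` {n div 2..n-1}. Bset C n j)"
    by simp
  also have "(\<lambda>j. n - j) ` {n div 2..n-1} = {1..(n+1) div 2}"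
  proof
    show "(\<lambda>j. n - j) ` {n div 2..n-1} \<subseteq> {1..(n+1) div 2}"
    proof
      fix d assume "d \<in> (\<lambda>j. n - j) ` {n div 2..n-1}"
      then obtain j where j: "n div 2 \<le> j" "j \<le> n - 1" "d = n - j" by auto
      show "d \<in> {1..(n+1) div 2}" using j assms by simp linarith
    qed
    show "{1..(n+1) div 2} \<subseteq> (\<lambda>j. n - j) ` {n div 2..n-1}"
    proof
      fix d assume d: "d \<in> {1..(n+1) div 2}"
      then have "1 \<le> d" "d \<le> (n+1) div 2" by auto
      then have "n - d \<in> {n div 2..n-1}" "d = n - (n - d)" using assms by (simp; linarith)+
      then show "d \<in> (\<lambda>j. n - j) ` {n div 2..n-1}" by blast
    qed
  qed
  finally show ?thesis .
qed

lemma bset_period: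
  assumes "xs \<in> Bset C n j" "0 < j" "i < n"
  shows "xs ! i = xs ! (i mod j)"
  using assms(3)
proof (induction i rule: less_induct)
  case (less i)
  show ?case
  proof (cases "i < j")
    case True then show ?thesis by simp
  next
    case False
    have "i - j + j < n" using False less.prems by linarith
    then have "xs ! (i - j + j) = xs ! (i - j)" using assms(1) unfolding Bset_def by blast
    moreover have "xs ! (i - j) = xs ! ((i - j) mod j)"
      by (rule less.IH) (use False assms(2) less.prems in linarith)+
    moreover have "(i - j) mod j = i mod j" using False by (simp add: le_mod_geq)
    ultimately show ?thesis using False by simp
  qed
qed

lemma bset_inj:
  assumes "0 < j"
  shows "inj_on (take j) (Bset C n j)"
proof
  fix x y assume x: "x \<in> Bset C n j" and y: "y \<in> Bset C n j" and e: "take j x = take j y"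
  have lx: "length x = n" and ly: "length y = n" using x y unfolding Bset_def strings_def by blast+
  show "x = y"
  proof (rule nth_equalityI)
    show "length x = length y" using lx ly by simp
    fix i assume i: "i < length x"
    have "x ! i = x ! (i mod j)" using bset_period[OF x assms] i lx by simp
    moreover have "y ! i = y ! (i mod j)" using bset_period[OF y assms] i lx by simp
    moreover have "i mod j < j" using assms by simp
    moreover have "x ! (i mod j) = y ! (i mod j)"
      using arg_cong[OF e, of "\<lambda>l. l ! (i mod j)"] \<open>i mod j < j\<close> by simp
    ultimately show "x ! i = y ! i" by simp
  qed
qed

lemma bset1:
  assumes "0 < j"
  shows "Bset C n 1 \<subseteq> Bset C n j"
proof
  fix x assume x: "x \<in> Bset C n 1"
  have c: "x ! i = x ! 0" if "i < n" for i
    using bset_period[OF x, of i] that by simp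
  have "x \<in> strings C n" using x unfolding Bset_def by blast
  moreover have "x ! (i + j) = x ! i" if "i + j < n" for i
  proof -
    have "i < n" using that by linarith
    then show ?thesis using c[of "i+j"] c[of i] that by metis
  qed
  ultimately show "x \<in> Bset C n j" unfolding Bset_def by blast
qed

lemma union_bound:
  fixes f :: "'b \<Rightarrow> real"
  assumes "finite J" "f summable_on S" "\<And>x. x \<in> S \<Longrightarrow> 0 \<le> f x" "\<And>j. j \<in> J \<Longrightarrow> B j \<subseteq> S"
  shows "infsum f (\<Union>j\<in>J. B j) \<le> (\<Sum>j\<in>J. infsum f (B j))"
  using assms(1,4)
proof (induction J rule: finite_induct)
  case empty then show ?case by simp
next
  case (insert j J)
  let ?U = "\<Union>j\<in>J. B j"
  have US: "?U \<subseteq> S" and BS: "B j \<subseteq> S" using insert.prems by auto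
  have sU: "f summable_on ?U" using summable_on_subset[OF assms(2) US] .
  have sB: "f summable_on B j" using summable_on_subset[OF assms(2) BS] .
  have sD: "f summable_on (?U - B j)" using summable_on_subset[OF assms(2)] US by blast
  have "infsum f (\<Union>j\<in>insert j J. B j) = infsum f (B j \<union> (?U - B j))"
    by (simp add: Un_Diff_cancel)
  also have "\<dots> = infsum f (B j) + infsum f (?U - B j)"
    by (rule infsum_Un_disjoint[OF sB sD]) auto
  also have "infsum f (?U - B j) \<le> infsum f ?U"
    by (rule infsum_mono_neutral[OF sD sU]) (use US assms(3) in auto)
  also have "infsum f ?U \<le> (\<Sum>j\<in>J. infsum f (B j))"
    using insert by auto
  finally show ?case using insert by simp
qed




lemma basic:
  assumes pos: "\<forall>a\<in>C. 0 < p a \<and> p a < 1" and hs: "(p has_sum 1) C"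
  shows "p summable_on C" "infsum p C = 1" "(\<lambda>a. p a ^ 2) summable_on C"
    "0 < m2 p C" "m2 p C \<le> 1" "\<And>a. a \<in> C \<Longrightarrow> p a \<le> sqrt (m2 p C)"
proof -
  show ps: "p summable_on C" using hs summable_on_def by blast
  show is1: "infsum p C = 1" using hs by (rule infsumI)
  have le: "p a ^ 2 \<le> p a" if "a \<in> C" for a
  proof -
    have "0 < p a" "p a < 1" using pos that by auto
    then show ?thesis by (simp add: power2_eq_square mult_left_le)
  qed
  show sq: "(\<lambda>a. p a ^ 2) summable_on C"
    by (rule summable_on_comparison_test[OF ps]) (use le in auto)
  have el: "p a ^ 2 \<le> m2 p C" if "a \<in> C" for a
  proof -
    have "sum (\<lambda>a. p a ^ 2) {a} \<le> infsum (\<lambda>a. p a ^ 2) C"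
      by (rule finite_sum_le_infsum[OF sq]) (use that in auto)
    then show ?thesis unfolding m2_def by simp
  qed
  have "C \<noteq> {}" using is1 by auto
  then obtain a where a: "a \<in> C" by blast
  have "0 < p a" using pos a by blast
  then have "0 < p a ^ 2" by simp
  then show "0 < m2 p C" using el[OF a] by linarith
  have "infsum (\<lambda>a. p a ^ 2) C \<le> infsum p C"
    by (rule infsum_mono[OF sq ps]) (use le in auto)
  then show "m2 p C \<le> 1" using is1 unfolding m2_def by simp
  fix b assume b: "b \<in> C"
  have "sqrt (p b ^ 2) \<le> sqrt (m2 p C)" using el[OF b] by (rule real_sqrt_le_mono)
  then show "p b \<le> sqrt (m2 p C)" using pos b by simp
qed

lemma Wsum:
  fixes p :: "'a \<Rightarrow> real"
  assumes pos: "\<forall>a\<in>C. 0 < p a \<and> p a < 1" and hs: "(p has_sum 1) C"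
  shows "(\<lambda>xs. \<Prod>i<length xs. p (xs ! i)) summable_on strings C n"
proof -
  have "(\<lambda>u. \<Prod>k<n. p (u ! k)) summable_on strings C n"
    by (rule prodsum(2)) (use pos basic[OF pos hs] in auto)
  then show ?thesis
    by (rule summable_on_cong[THEN iffD1, rotated]) (simp add: strings_def)
qed

lemma prod_if_prefix:
  fixes g :: "nat \<Rightarrow> real"
  assumes "t \<le> j"
  shows "(\<Prod>k<j. if k < t then g k else 1) = (\<Prod>k<t. g k)"
proof -
  have "(\<Prod>k<j. if k < t then g k else 1) = (\<Prod>k\<in>{..<j} \<inter> {k. k < t}. g k) * (\<Prod>k\<in>{..<j} \<inter> - {k. k < t}. 1)"
    by (rule prod.If_cases) simp
  also have "{..<j} \<inter> {k. k < t} = {..<t}" using assms by auto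
  finally show ?thesis by simp
qed

lemma Bbound:
  fixes p :: "'a \<Rightarrow> real"
  assumes pos: "\<forall>a\<in>C. 0 < p a \<and> p a < 1" and hs: "(p has_sum 1) C"
    and j1: "1 \<le> j" and jc: "j \<le> (n+1) div 2" and n2: "2 \<le> n"
  shows "Pr p (Bset C n j) \<le> m2 p C ^ (n div 2)"
proof -
  note bs = basic[OF pos hs]
  define m where "m = m2 p C"
  define s where "s = sqrt m"
  define t where "t = min j (n - j)"
  define e where "e = n - j - t"
  define f where "f k a = p a * (if k < t then p a else 1)" for k a
  define G where "G u = (\<Prod>k<j. f k (u ! k))" for u
  define W where "W xs = (\<Prod>i<length xs. p (xs ! i))" for xs
  define B where "B = Bset C n j"
  have jn: "j < n" using jc n2 by linarith
  have tj: "t \<le> j" and tn: "j + t \<le> n" using jn unfolding t_def by auto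
  have m0: "0 < m" and m1: "m \<le> 1" using bs unfolding m_def by auto
  have s0: "0 \<le> s" and s1: "s \<le> 1" unfolding s_def using m0 m1 by auto
  have pls: "p a \<le> s" if "a \<in> C" for a using bs(6)[OF that] unfolding s_def m_def .
  have p0: "0 \<le> p a" if "a \<in> C" for a using pos that by auto
  have fk: "infsum (f k) C = (if k < t then m else 1) \<and> f k summable_on C" for k
  proof (cases "k < t")
    case True
    then have "f k = (\<lambda>a. p a ^ 2)" unfolding f_def by (simp add: fun_eq_iff power2_eq_square)
    then show ?thesis using True bs unfolding m_def m2_def by simp
  next
    case False
    then have "f k = p" unfolding f_def by (simp add: fun_eq_iff)
    then show ?thesis using False bs by simp
  qed
  have f0: "0 \<le> f k a" if "a \<in> C" for k a using p0[OF that] unfolding f_def by simp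
  have Gs: "G summable_on strings C j" and Gi: "infsum G (strings C j) = (\<Prod>k<j. infsum (f k) C)"
    unfolding G_def by (rule prodsum; use fk f0 m0 in auto)+
  have "(\<Prod>k<j. infsum (f k) C) = (\<Prod>k<j. if k < t then m else 1)"
    using fk by simp
  also have "\<dots> = m ^ t" using prod_if_prefix[OF tj, of "\<lambda>_. m"] by simp
  finally have GI: "infsum G (strings C j) = m ^ t" using Gi by simp
  have G0: "0 \<le> G u" if "u \<in> strings C j" for u
  proof -
    have "u ! k \<in> C" if "k < j" for k using \<open>u \<in> strings C j\<close> that nth_mem unfolding strings_def by blast
    then show ?thesis unfolding G_def using f0 by (intro prod_nonneg) auto
  qed
  have wb: "W x \<le> G (take j x) * s ^ e" if x: "x \<in> B" for x
  proof -
    have lx: "length x = n" and sx: "set x \<subseteq> C" using x unfolding B_def Bset_def strings_def by auto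
    have xC: "x ! i \<in> C" if "i < n" for i using sx lx that nth_mem by blast
    have per: "x ! (i + j) = x ! i" if "i + j < n" for i using x that unfolding B_def Bset_def by blast
    have "W x = (\<Prod>i\<in>{0..<n}. p (x ! i))" unfolding W_def lx by (simp add: atLeast0LessThan)
    also have "\<dots> = (\<Prod>i\<in>{0..<j+t}. p (x ! i)) * (\<Prod>i\<in>{j+t..<n}. p (x ! i))"
      using tn by (simp add: prod.atLeastLessThan_concat)
    also have "(\<Prod>i\<in>{0..<j+t}. p (x ! i)) = (\<Prod>i\<in>{0..<j}. p (x ! i)) * (\<Prod>i\<in>{j..<j+t}. p (x ! i))"
      by (simp add: prod.atLeastLessThan_concat)
    also have "(\<Prod>i\<in>{j..<j+t}. p (x ! i)) = (\<Prod>i\<in>{0..<t}. p (x ! (i + j)))"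
      using prod.shift_bounds_nat_ivl[of "\<lambda>i. p (x ! i)" 0 j t] by (simp add: add.commute)
    also have "\<dots> = (\<Prod>i\<in>{0..<t}. p (x ! i))"
      by (rule prod.cong) (use per tn in auto)
    also have "(\<Prod>i\<in>{0..<j}. p (x ! i)) * (\<Prod>i\<in>{0..<t}. p (x ! i)) = G (take j x)"
    proof -
      have "G (take j x) = (\<Prod>k<j. p (x ! k) * (if k < t then p (x ! k) else 1))"
        unfolding G_def f_def by (intro prod.cong) auto
      also have "\<dots> = (\<Prod>k<j. p (x ! k)) * (\<Prod>k<j. if k < t then p (x ! k) else 1)"
        by (rule prod.distrib)
      also have "(\<Prod>k<j. if k < t then p (x ! k) else 1) = (\<Prod>k<t. p (x ! k))"
        by (rule prod_if_prefix[OF tj])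
      finally show ?thesis by (simp add: atLeast0LessThan)
    qed
    finally have eq: "W x = G (take j x) * (\<Prod>i\<in>{j+t..<n}. p (x ! i))" .
    have "(\<Prod>i\<in>{j+t..<n}. p (x ! i)) \<le> (\<Prod>i\<in>{j+t..<n}. s)"
      by (rule prod_mono) (use xC p0 pls in auto)
    also have "(\<Prod>i\<in>{j+t..<n}. s) = s ^ e" unfolding e_def by simp
    finally have le: "(\<Prod>i\<in>{j+t..<n}. p (x ! i)) \<le> s ^ e" .
    have "take j x \<in> strings C j" using lx sx jn set_take_subset[of j x] unfolding strings_def by auto
    then have Gx: "0 \<le> G (take j x)" by (rule G0)
    show ?thesis using mult_left_mono[OF le Gx] eq by simp
  qed
  have Ws: "W summable_on B"
    using Wsum[OF pos hs, of n] unfolding W_def[abs_def] B_def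
    by (rule summable_on_subset) (auto simp: Bset_def)
  have inj: "inj_on (take j) B" unfolding B_def using j1 by (intro bset_inj) simp
  have tB: "take j ` B \<subseteq> strings C j"
    unfolding B_def Bset_def strings_def using jn by (auto dest: set_take_subset[THEN subsetD])
  have Gt: "G summable_on (take j ` B)" using Gs tB by (rule summable_on_subset)
  have GtB: "(\<lambda>x. G (take j x)) summable_on B"
    using Gt unfolding summable_on_reindex[OF inj] by (simp add: comp_def)
  have "Pr p (Bset C n j) = infsum W B" unfolding Pr_def W_def[abs_def] B_def ..
  also have "\<dots> \<le> infsum (\<lambda>x. G (take j x) * s ^ e) B"
    by (rule infsum_mono[OF Ws summable_on_cmult_left[OF GtB]]) (use wb in auto)
  also have "\<dots> = infsum (\<lambda>x. G (take j x)) B * s ^ e"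
    by (rule infsum_cmult_left) (use GtB in auto)
  also have "infsum (\<lambda>x. G (take j x)) B = infsum G (take j ` B)"
    using infsum_reindex[OF inj, of G] by (simp add: comp_def)
  also have "\<dots> \<le> infsum G (strings C j)"
    by (rule infsum_mono_neutral[OF Gt Gs]) (use tB G0 in auto)
  also have "\<dots> = m ^ t" by (rule GI)
  finally have "Pr p (Bset C n j) \<le> m ^ t * s ^ e"
    using s0 by (simp add: mult_right_mono)
  also have "m ^ t * s ^ e = s ^ (2 * t + e)"
    unfolding s_def using m0 by (simp add: power_add power_mult)
  also have "\<dots> \<le> s ^ (2 * (n div 2))"
  proof (rule power_decreasing)
    show "2 * (n div 2) \<le> 2 * t + e" unfolding t_def e_def using jc jn by (cases "j \<le> n - j") auto
  qed (use s0 s1 in auto)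
  also have "\<dots> = m ^ (n div 2)" unfolding s_def using m0 by (simp add: power_mult)
  finally show ?thesis unfolding m_def .
qed
theorem lemma4:
  fixes C :: "'a set" and p :: "'a \<Rightarrow> real" and n :: nat
  assumes "countable C"
    and "\<forall>a\<in>C. 0 < p a \<and> p a < 1"
    and "(p has_sum 1) C"
    and "n \<ge> 2"
  shows "Pr p (\<Union>j\<in>{1..(n+1) div 2}. Bset C n j) = Pr p (\<Union>j\<in>{n div 2..n-1}. Rset C n j)
       \<and> Pr p (\<Union>j\<in>{n div 2..n-1}. Rset C n j) \<le> real n / 2 * (m2 p C) ^ (n div 2)"
proof -
  note pos = assms(2) and hs = assms(3) and n2 = assms(4)
  have U: "(\<Union>j\<in>{n div 2..n-1}. Rset C n j) = (\<Union>j\<in>{1..(n+1) div 2}. Bset C n j)"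
    by (rule union_eq[OF n2])
  define J where "J = (if n = 2 then {1} else {2..(n+1) div 2})"
  have UJ: "(\<Union>j\<in>{1..(n+1) div 2}. Bset C n j) = (\<Union>j\<in>J. Bset C n j)"
  proof (cases "n = 2")
    case True
    then show ?thesis unfolding J_def by simp
  next
    case False
    then have c2: "2 \<le> (n+1) div 2" using n2 by linarith
    have "{1..(n+1) div 2} = insert 1 {2..(n+1) div 2}" using c2 by auto
    moreover have "Bset C n 1 \<subseteq> (\<Union>j\<in>{2..(n+1) div 2}. Bset C n j)"
      using bset1[of 2 C n] c2 by auto
    ultimately show ?thesis unfolding J_def using False by auto
  qed
  have Jsub: "J \<subseteq> {1..(n+1) div 2}" unfolding J_def using n2 by auto
  have cardJ: "real (card J) \<le> real n / 2"
  proof (cases "n = 2")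
    case True then show ?thesis unfolding J_def by simp
  next
    case False
    then have "2 * card J \<le> n" unfolding J_def using n2 by simp
    then show ?thesis by linarith
  qed
  have pn: "0 \<le> (\<Prod>i<length x. p (x ! i))" if "x \<in> strings C n" for x
  proof -
    have "x ! i \<in> C" if "i < length x" for i using \<open>x \<in> strings C n\<close> that nth_mem unfolding strings_def by fastforce
    then have "0 \<le> p (x ! i)" if "i < length x" for i using pos that by fastforce
    then show ?thesis by (intro prod_nonneg) simp
  qed
  have "Pr p (\<Union>j\<in>J. Bset C n j) \<le> (\<Sum>j\<in>J. Pr p (Bset C n j))"
    unfolding Pr_def
    by (rule union_bound[OF _ Wsum[OF pos hs, of n]])
       (use pn in \<open>auto simp: J_def Bset_def\<close>)
  also have "\<dots> \<le> (\<Sum>j\<in>J. m2 p C ^ (n div 2))"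
    by (rule sum_mono, rule Bbound[OF pos hs]) (use Jsub n2 in auto)
  also have "\<dots> = real (card J) * m2 p C ^ (n div 2)" by simp
  also have "\<dots> \<le> real n / 2 * m2 p C ^ (n div 2)"
    by (rule mult_right_mono[OF cardJ]) (use basic(4)[OF pos hs] in simp)
  finally show ?thesis unfolding U UJ by simp
qed


end
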